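(* Let $k\in\mathbb Z$ and $u_0\in\Sigma^1_k$. Suppose there exist $T>0$ and a solution $u\in C^1([0,T),\Lambda^1_k)$ of $u_{xt}=\sin(u)$ with $u(0)=u_0$. Then \[ K_1(u_0):=\int_0^1\cos(u_0)\,\partial_x^{-1}\sin(u_0)\,dx=0 . \]
   Context: $\mathbb T=\mathbb R/\mathbb Z$, $H^m=H^m(\mathbb T,\mathbb R)$, $H_0^m$ is its mean-zero subspace, and $\partial_x^{-1}$ is the mean-zero antiderivative. For $k\in\mathbb Z$, $\Lambda^m_k$ is the set of $u:\mathbb R\to\mathbb R$ of the form $u(x)=2\pi kx+\mathring u(x)+c$ with $\mathring u\in H_0^m$ ($1$-periodically extended) and $c\in\mathbb R/2\pi\mathbb Z$. We set \[ \Sigma^1_k=\Big\{u\in\Lambda^1_k:\int_0^1\sin u\,dx=0=\int_0^1\cos u\,dx\Big\}. \] For $u\in\Sigma^1_k$, $\sin u$ is $1$-periodic with mean zero, so $\partial_x^{-1}\sin u$ is defined. A solution $u\in C^1([0,T),\Lambda^1_k)$ means a $C^1$ curve with $\partial_t u(t)\in H^1$ and $\partial_x\partial_t u(t)=\sin(u(t))$ for all $t$. *)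

theory Defs
  imports "HOL-Analysis.Analysis"
begin

text \<open>Functions on the torus are represented as 1-periodic functions on the real line.\<close>

definition periodic1 :: "(real \<Rightarrow> real) \<Rightarrow> bool" where
  "periodic1 f \<longleftrightarrow> (\<forall>x. f (x + 1) = f x)"

definition H1_wderiv :: "(real \<Rightarrow> real) \<Rightarrow> (real \<Rightarrow> real) \<Rightarrow> bool" where
  "H1_wderiv f g \<longleftrightarrow> periodic1 g \<and> g \<in> borel_measurable lborel \<and>
     set_integrable lborel {0..1} (\<lambda>x. (g x)^2) \<and>
     (\<forall>x. f x = f 0 + (LBINT s=0..x. g s))"

definition H1 :: "(real \<Rightarrow> real) \<Rightarrow> bool" where
  "H1 f \<longleftrightarrow> periodic1 f \<and> (\<exists>g. H1_wderiv f g)"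

definition H1_0 :: "(real \<Rightarrow> real) \<Rightarrow> bool" where
  "H1_0 f \<longleftrightarrow> H1 f \<and> (LBINT x=0..1. f x) = 0"

definition H1norm :: "(real \<Rightarrow> real) \<Rightarrow> real" where
  "H1norm f = sqrt ((LBINT x=0..1. (f x)^2) + (LBINT x=0..1. ((SOME g. H1_wderiv f g) x)^2))"

text \<open>Lambda^1_k (constant c taken as a real representative of R/2piZ)\<close>
definition Lambda1 :: "int \<Rightarrow> (real \<Rightarrow> real) \<Rightarrow> bool" where
  "Lambda1 k u \<longleftrightarrow> (\<exists>w c. H1_0 w \<and> (\<forall>x. u x = 2 * pi * real_of_int k * x + w x + c))"

definition Sigma1 :: "int \<Rightarrow> (real \<Rightarrow> real) \<Rightarrow> bool" where
  "Sigma1 k u \<longleftrightarrow> Lambda1 k u \<and> (LBINT x=0..1. sin (u x)) = 0 \<and> (LBINT x=0..1. cos (u x)) = 0"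

definition antideriv0 :: "(real \<Rightarrow> real) \<Rightarrow> real \<Rightarrow> real" where
  "antideriv0 f x = (LBINT s=0..x. f s) - (LBINT y=0..1. (LBINT s=0..y. f s))"

definition is_solution :: "int \<Rightarrow> real \<Rightarrow> (real \<Rightarrow> real \<Rightarrow> real) \<Rightarrow> bool" where
  "is_solution k T u \<longleftrightarrow>
     (\<forall>t\<in>{0..<T}. Lambda1 k (u t)) \<and>
     (\<exists>v. (\<forall>t\<in>{0..<T}. H1 (v t)) \<and>
          (\<forall>t\<in>{0..<T}. ((\<lambda>s. H1norm (\<lambda>x. (u s x - u t x) / (s - t) - v t x)) \<longlongrightarrow> 0)
                            (at t within {0..<T})) \<and>
          (\<forall>t\<in>{0..<T}. ((\<lambda>s. H1norm (\<lambda>x. v s x - v t x)) \<longlongrightarrow> 0) (at t within {0..<T})) \<and>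
          (\<forall>t\<in>{0..<T}. H1_wderiv (v t) (\<lambda>x. sin (u t x))))"

end

theory Submission
  imports Defs
begin

lemma abs_mul_le: "\<bar>x\<bar> \<le> 1 \<Longrightarrow> \<bar>y\<bar> \<le> c \<Longrightarrow> \<bar>(x::real) * y\<bar> \<le> c"
  by (simp add: abs_mult) (metis abs_ge_zero mult_le_one mult_mono mult_1 order_trans)
lemma sin_taylor2: "\<bar>sin (b + h) - sin b - cos b * h\<bar> \<le> 3 * (h::real)^2"
proof -
  have s: "\<bar>sin h - h\<bar> \<le> h^2/2"
    using Maclaurin_sin_bound[of h 2] by (simp add: sin_coeff_def numeral_2_eq_2 power2_eq_square)
  have c: "\<bar>cos h - 1\<bar> \<le> h^2/2"
  proof -
    have "cos h = 1 - 2 * (sin (h/2))^2" using cos_double_sin[of "h/2"] by simp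
    moreover have "(sin (h/2))^2 \<le> (h/2)^2"
      using abs_sin_x_le_abs_x[of "h/2"] by (metis abs_ge_zero power2_abs power_mono)
    ultimately show ?thesis by (simp add: power_divide)
  qed
  have e: "sin (b + h) - sin b - cos b * h = sin b * (cos h - 1) + cos b * (sin h - h)"
    by (simp add: sin_add algebra_simps)
  have "\<bar>sin b * (cos h - 1)\<bar> \<le> h^2/2"
    by (rule abs_mul_le[OF abs_sin_le_one c])
  moreover have "\<bar>cos b * (sin h - h)\<bar> \<le> h^2/2"
    by (rule abs_mul_le[OF abs_cos_le_one s])
  ultimately show ?thesis unfolding e using abs_triangle_ineq[of "sin b * (cos h - 1)" "cos b * (sin h - h)"] zero_le_power2[of h] by linarith
qed

lemma abs_le_sq: "\<bar>a::real\<bar> \<le> 1 + a^2"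
proof -
  have "0 \<le> (\<bar>a\<bar> - 1)^2" by simp
  then have "0 \<le> \<bar>a\<bar>*\<bar>a\<bar> - 2*\<bar>a\<bar> + 1" by (simp add: power2_eq_square algebra_simps)
  moreover have "\<bar>a\<bar>*\<bar>a\<bar> = a^2" by (simp add: power2_eq_square abs_mult_self_eq)
  ultimately show ?thesis by linarith
qed

lemma H1_wderiv_int: assumes "H1_wderiv f g" shows "set_integrable lborel {0..1} g"
proof -
  have m: "g \<in> borel_measurable lborel" and sq: "set_integrable lborel {0..1} (\<lambda>x. (g x)^2)"
    using assms unfolding H1_wderiv_def by auto
  have one: "set_integrable lborel {0..1::real} (\<lambda>x. 1::real)"
    unfolding set_integrable_def by (rule borel_integrable_compact) auto
  have b: "set_integrable lborel {0..1} (\<lambda>x. 1 + (g x)^2)"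
    using set_integral_add(1)[OF one sq] by simp
  show ?thesis
  proof (rule set_integrable_bound[OF b])
    show "set_borel_measurable lborel {0..1} g" using m unfolding set_borel_measurable_def by measurable
    show "AE x\<in>{0..1} in lborel. norm (g x) \<le> norm (1 + (g x)^2)"
    proof (rule AE_I2, intro impI)
      fix x have "\<bar>g x\<bar> \<le> 1 + (g x)^2"
        using abs_le_sq[of "g x"] .
      then show "norm (g x) \<le> norm (1 + (g x)^2)" by simp
    qed
  qed
qed

lemma H1_wderiv_cont: assumes "H1_wderiv f g" shows "continuous_on {0..1} f"
proof -
  have gi: "set_integrable lborel {0..1} g" using H1_wderiv_int[OF assms] .
  have eq: "f x = f 0 + integral {0..x} g" if "x \<in> {0..1}" for x
  proof -
    have "f x = f 0 + (LBINT s=0..x. g s)" using assms unfolding H1_wderiv_def by blast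
    also have "(LBINT s=0..x. g s) = (LBINT s:{0..x}. g s)" using that interval_integral_Icc[of 0 x g] by (simp add: zero_ereal_def)
    also have "\<dots> = integral {0..x} g"
      by (rule set_borel_integral_eq_integral(2), rule set_integrable_subset[OF gi]) (use that in auto)
    finally show ?thesis .
  qed
  have "continuous_on {0..1} (\<lambda>x. f 0 + integral {0..x} g)"
    by (intro continuous_intros indefinite_integral_continuous_1 set_borel_integral_eq_integral(1) gi)
  then show ?thesis by (rule continuous_on_eq) (rule eq[symmetric], assumption)
qed

lemma H1_cont: "H1 f \<Longrightarrow> continuous_on {0..1} f"
  unfolding H1_def using H1_wderiv_cont by blast

lemma Lambda1_cont: assumes "Lambda1 k u" shows "continuous_on {0..1} u"
proof -
  obtain w c where w: "H1_0 w" and u: "\<And>x. u x = 2 * pi * real_of_int k * x + w x + c"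
    using assms unfolding Lambda1_def by blast
  have "continuous_on {0..1} w" using w H1_cont unfolding H1_0_def by blast
  then have "continuous_on {0..1} (\<lambda>x. 2 * pi * real_of_int k * x + w x + c)"
    by (intro continuous_intros)
  moreover have "u = (\<lambda>x. 2 * pi * real_of_int k * x + w x + c)" using u by auto
  ultimately show ?thesis by simp
qed

lemma LBINT01_set: "(LBINT x=0..1. f x) = (LBINT x:{0..1::real}. f x)"
  using interval_integral_Icc[of 0 1 f] by (simp add: zero_ereal_def one_ereal_def)

lemma LBINT01: "continuous_on {0..1} (f::real\<Rightarrow>real) \<Longrightarrow> (LBINT x=0..1. f x) = integral {0..1::real} f"
  unfolding LBINT01_set using borel_integrable_compact[of "{0..1}" f] set_borel_integral_eq_integral(2)[of "{0..1}" f]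
  unfolding set_integrable_def by auto

lemma LBINT01_nonneg: "(0::real) \<le> (LBINT x=0..1. (f x)^2)"
  unfolding LBINT01_set set_lebesgue_integral_def by (rule integral_nonneg_AE) (simp add: indicator_def)

lemma nb: "(T::real) > 0 \<Longrightarrow> at (0::real) within {0..<T} \<noteq> bot"
proof -
  assume T: "T > 0"
  have "(0::real) islimpt {0..<T}"
    unfolding islimpt_approachable_le
  proof (intro allI impI)
    fix e :: real assume "e > 0"
    then show "\<exists>x'\<in>{0..<T}. x' \<noteq> 0 \<and> dist x' 0 \<le> e"
      using T by (intro bexI[of _ "min e (T/2)"]) (auto simp: dist_real_def)
  qed
  then show ?thesis using trivial_limit_within by blast
qed

lemma abs2: "\<bar>A\<bar> \<le> a \<Longrightarrow> \<bar>B\<bar> \<le> b \<Longrightarrow> \<bar>- A - B\<bar> \<le> (a::real) + b"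
  by arith

lemma ptw:
  fixes s e a b v :: real
  assumes s: "s > 0" and e: "e > 0"
  shows "\<bar>cos b * v - (sin a - sin b) / s\<bar> \<le> 6 * s * ((a-b)/s - v)^2 + 6 * s * v^2 + e + ((a-b)/s - v)^2/e"
proof -
  define q where "q = (a-b)/s"
  define h where "h = a - b"
  have hq: "h = s * q" using s by (simp add: q_def h_def)
  have t: "\<bar>sin (b + h) - sin b - cos b * h\<bar> \<le> 3 * h^2" by (rule sin_taylor2)
  have ab: "b + h = a" by (simp add: h_def)
  have "\<bar>(sin a - sin b - cos b * h)/s\<bar> \<le> 3 * h^2 / s"
    using t s ab by (simp add: abs_divide divide_right_mono)
  also have "3 * h^2 / s = 3 * s * q^2" using s by (simp add: hq power2_eq_square)
  finally have t2: "\<bar>(sin a - sin b)/s - cos b * q\<bar> \<le> 3 * s * q^2"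
    using s by (simp add: hq diff_divide_distrib)
  have c: "\<bar>cos b * (q - v)\<bar> \<le> \<bar>q - v\<bar>"
    using abs_cos_le_one[of b] by (simp add: abs_mult mult_left_le_one_le)
  have qq: "q^2 \<le> 2 * (q-v)^2 + 2 * v^2"
  proof -
    have "0 \<le> (q - 2 * v)^2" by simp
    then show ?thesis by (simp add: power2_eq_square algebra_simps)
  qed
  have qv: "\<bar>q - v\<bar> \<le> e + (q-v)^2/e"
  proof (cases "\<bar>q - v\<bar> \<le> e")
    case True then show ?thesis using e by (simp add: add_increasing2)
  next
    case False
    then have "\<bar>q - v\<bar> * e \<le> \<bar>q - v\<bar> * \<bar>q - v\<bar>" by (intro mult_left_mono) auto
    then have "\<bar>q - v\<bar> \<le> (q-v)^2/e" using e by (simp add: pos_le_divide_eq power2_eq_square abs_mult_self_eq)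
    then show ?thesis using e by simp
  qed
  have eq: "cos b * v - (sin a - sin b) / s = - ((sin a - sin b)/s - cos b * q) - cos b * (q - v)"
    by (simp add: algebra_simps)
  have "\<bar>cos b * v - (sin a - sin b) / s\<bar> \<le> 3 * s * q^2 + \<bar>q - v\<bar>"
    unfolding eq using abs2[OF t2 c] .
  also have "\<dots> \<le> 3 * s * (2 * (q-v)^2 + 2 * v^2) + (e + (q-v)^2/e)"
    using qq qv s by (intro add_mono mult_left_mono) auto
  finally show ?thesis by (simp add: q_def algebra_simps)
qed

theorem lemma4p1:
  fixes k :: int and u0 :: "real \<Rightarrow> real" and T :: real and u :: "real \<Rightarrow> real \<Rightarrow> real"
  assumes "Sigma1 k u0"
    and "T > 0"
    and "is_solution k T u"
    and "u 0 = u0"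
  shows "(LBINT x=0..1. cos (u0 x) * antideriv0 (\<lambda>y. sin (u0 y)) x) = 0"
proof -
  have T: "T > 0" by fact
  have L: "\<And>t. t \<in> {0..<T} \<Longrightarrow> Lambda1 k (u t)" using assms(3) unfolding is_solution_def by blast
  obtain v where vH1: "\<And>t. t\<in>{0..<T} \<Longrightarrow> H1 (v t)"
    and dq: "\<And>t. t\<in>{0..<T} \<Longrightarrow> ((\<lambda>s. H1norm (\<lambda>x. (u s x - u t x) / (s - t) - v t x)) \<longlongrightarrow> 0)
                            (at t within {0..<T})"
    and wd: "\<And>t. t\<in>{0..<T} \<Longrightarrow> H1_wderiv (v t) (\<lambda>x. sin (u t x))"
    using assms(3) unfolding is_solution_def by blast
  have uc: "\<And>t. t \<in> {0..<T} \<Longrightarrow> continuous_on {0..1} (u t)" using L Lambda1_cont by blast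
  have vc: "\<And>t. t \<in> {0..<T} \<Longrightarrow> continuous_on {0..1} (v t)" using vH1 H1_cont by blast
  have T0: "0 \<in> {0..<T}" using T by simp
  have sinzero: "integral {0..1} (\<lambda>x. sin (u t x)) = 0" if t: "t \<in> {0..<T}" for t
  proof -
    have "\<forall>x. v t x = v t 0 + (LBINT s=0..x. sin (u t s))" using wd[OF t] unfolding H1_wderiv_def by blast
    then have a0: "v t 1 = v t 0 + (LBINT s=0..ereal 1. sin (u t s))" by blast
    then have a: "v t 1 = v t 0 + (LBINT s=0..1. sin (u t s))" by (simp add: one_ereal_def)
    have "v t (0 + 1) = v t 0" using vH1[OF t] unfolding H1_def periodic1_def by blast
    then have "(LBINT s=0..1. sin (u t s)) = 0" using a by simp
    moreover have "continuous_on {0..1} (\<lambda>x. sin (u t x))" using uc[OF t] by (intro continuous_intros)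
    ultimately show ?thesis using LBINT01 by metis
  qed
  have u0c: "continuous_on {0..1} u0" using uc[OF T0] assms(4) by simp
  have v0c: "continuous_on {0..1} (v 0)" using vc[OF T0] .
  have cos0: "integral {0..1} (\<lambda>x. cos (u0 x)) = 0"
  proof -
    have "(LBINT x=0..1. cos (u0 x)) = 0" using assms(1) unfolding Sigma1_def by blast
    moreover have "continuous_on {0..1} (\<lambda>x. cos (u0 x))" using u0c by (intro continuous_intros)
    ultimately show ?thesis using LBINT01 by metis
  qed
  define I where "I = integral {0..1} (\<lambda>x. cos (u0 x) * v 0 x)"
  define C where "C = (LBINT y=0..1. (LBINT s=0..y. sin (u0 s)))"
  have vrep: "antideriv0 (\<lambda>y. sin (u0 y)) x = v 0 x - v 0 0 - C" for x
  proof -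
    have "\<forall>x. v 0 x = v 0 0 + (LBINT s=0..x. sin (u 0 s))" using wd[OF T0] unfolding H1_wderiv_def by blast
    then have "v 0 x = v 0 0 + (LBINT s=0..x. sin (u 0 s))" by blast
    then have "v 0 x = v 0 0 + (LBINT s=0..x. sin (u0 s))" unfolding assms(4) .
    then show ?thesis unfolding antideriv0_def C_def by simp
  qed
  have goal_eq: "(LBINT x=0..1. cos (u0 x) * antideriv0 (\<lambda>y. sin (u0 y)) x) = I"
  proof -
    have c1: "continuous_on {0..1} (\<lambda>x. cos (u0 x) * (v 0 x - v 0 0 - C))"
      using u0c v0c by (intro continuous_intros)
    have "(\<lambda>x. cos (u0 x) * antideriv0 (\<lambda>y. sin (u0 y)) x) = (\<lambda>x. cos (u0 x) * (v 0 x - v 0 0 - C))"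
      using vrep by simp
    then have "(LBINT x=0..1. cos (u0 x) * antideriv0 (\<lambda>y. sin (u0 y)) x)
        = integral {0..1} (\<lambda>x. cos (u0 x) * (v 0 x - v 0 0 - C))"
      using LBINT01[OF c1] by simp
    also have "\<dots> = integral {0..1} (\<lambda>x. cos (u0 x) * v 0 x - (v 0 0 + C) * cos (u0 x))"
      by (simp add: algebra_simps)
    also have "\<dots> = I - (v 0 0 + C) * integral {0..1} (\<lambda>x. cos (u0 x))"
      unfolding I_def
      by (subst integral_diff) (auto intro!: integrable_continuous_interval continuous_intros u0c v0c)
    also have "\<dots> = I" using cos0 by simp
    finally show ?thesis .
  qed
  define F where "F = at (0::real) within {0..<T}"
  have Fnb: "F \<noteq> bot" unfolding F_def using nb[OF T] .
  define D where "D = (\<lambda>s. integral {0..1} (\<lambda>x. ((u s x - u 0 x) / (s - 0) - v 0 x)^2))"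
  define V where "V = integral {0..1} (\<lambda>x. (v 0 x)^2)"
  have evs: "\<forall>\<^sub>F s in F. s \<in> {0..<T} \<and> s \<noteq> 0"
    unfolding F_def eventually_at_filter by simp
  have Dlim: "(D \<longlongrightarrow> 0) F"
  proof (rule tendsto_sandwich[where f = "\<lambda>_. 0" and h = "\<lambda>s. (H1norm (\<lambda>x. (u s x - u 0 x) / (s - 0) - v 0 x))^2"])
    show "((\<lambda>_. 0::real) \<longlongrightarrow> 0) F" by simp
    have "((\<lambda>s. (H1norm (\<lambda>x. (u s x - u 0 x) / (s - 0) - v 0 x))^2) \<longlongrightarrow> 0^2) F"
      unfolding F_def by (intro tendsto_intros dq[OF T0])
    then show "((\<lambda>s. (H1norm (\<lambda>x. (u s x - u 0 x) / (s - 0) - v 0 x))^2) \<longlongrightarrow> 0) F" by simp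
    have both: "0 \<le> D s \<and> D s \<le> (H1norm (\<lambda>x. (u s x - u 0 x) / (s - 0) - v 0 x))^2"
      if s: "s \<in> {0..<T}" and sne: "s \<noteq> 0" for s
    proof -
      define h where "h = (\<lambda>x. (u s x - u 0 x) / (s - 0) - v 0 x)"
      have hc: "continuous_on {0..1} (\<lambda>x. (h x)^2)" unfolding h_def
        using uc[OF s] uc[OF T0] v0c sne by (intro continuous_intros) auto
      have A: "(LBINT x=0..1. (h x)^2) = D s" unfolding D_def using LBINT01[OF hc] by (simp add: h_def)
      have B: "0 \<le> (LBINT x=0..1. ((SOME g. H1_wderiv h g) x)^2)" by (rule LBINT01_nonneg)
      have D0: "0 \<le> D s" using A LBINT01_nonneg[of h] by simp
      have "(H1norm h)^2 = D s + (LBINT x=0..1. ((SOME g. H1_wderiv h g) x)^2)"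
        unfolding H1norm_def A using D0 B by simp
      then show ?thesis using D0 B unfolding h_def by simp
    qed
    show "\<forall>\<^sub>F s in F. 0 \<le> D s" using evs by eventually_elim (use both in blast)
    show "\<forall>\<^sub>F s in F. D s \<le> (H1norm (\<lambda>x. (u s x - u 0 x) / (s - 0) - v 0 x))^2"
      using evs by eventually_elim (use both in blast)
  qed
  have "\<bar>I\<bar> \<le> e" if e: "e > 0" for e
  proof (rule tendsto_le[OF Fnb])
    show "((\<lambda>_. \<bar>I\<bar>) \<longlongrightarrow> \<bar>I\<bar>) F" by simp
    have "((\<lambda>s. 6 * s * D s + 6 * s * V + e + D s/e) \<longlongrightarrow> 6 * 0 * 0 + 6 * 0 * V + e + 0/e) F"
      unfolding F_def by (intro tendsto_intros Dlim[unfolded F_def]) (use e in auto)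
    then show "((\<lambda>s. 6 * s * D s + 6 * s * V + e + D s/e) \<longlongrightarrow> e) F" by simp
    show "\<forall>\<^sub>F s in F. \<bar>I\<bar> \<le> 6 * s * D s + 6 * s * V + e + D s/e"
      using evs
    proof eventually_elim
      case (elim s)
      then have s: "s \<in> {0..<T}" and sp: "s > 0" by auto
      define d where "d = (\<lambda>x. (u s x - u 0 x) / s - v 0 x)"
      have dc: "continuous_on {0..1} d" unfolding d_def
        using uc[OF s] uc[OF T0] v0c sp by (intro continuous_intros) auto
      have u00: "u 0 = u0" by fact
      have int1: "integral {0..1} (\<lambda>x. cos (u0 x) * v 0 x - (sin (u s x) - sin (u0 x)) / s) = I"
      proof -
        have "integral {0..1} (\<lambda>x. cos (u0 x) * v 0 x - (sin (u s x) - sin (u0 x)) / s)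
          = I - integral {0..1} (\<lambda>x. (sin (u s x) - sin (u0 x)) / s)"
          unfolding I_def using uc[OF s] sp
          by (subst integral_diff) (auto intro!: integrable_continuous_interval continuous_intros u0c v0c)
        also have "integral {0..1} (\<lambda>x. (sin (u s x) - sin (u0 x)) / s)
           = (integral {0..1} (\<lambda>x. sin (u s x)) - integral {0..1} (\<lambda>x. sin (u0 x))) / s"
          unfolding integral_divide using uc[OF s] sp
          by (subst integral_diff) (auto intro!: integrable_continuous_interval continuous_intros u0c)
        also have "\<dots> = 0" using sinzero[OF s] sinzero[OF T0] u00 by simp
        finally show ?thesis by simp
      qed
      have int2: "integral {0..1} (\<lambda>x. 6 * s * (d x)^2 + 6 * s * (v 0 x)^2 + e + (d x)^2/e) = 6 * s * D s + 6 * s * V + e + D s/e"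
      proof -
        have i1: "(\<lambda>x. (d x)^2) integrable_on {0..1}" using dc by (intro integrable_continuous_interval continuous_intros)
        have i2: "(\<lambda>x. (v 0 x)^2) integrable_on {0..1}" using v0c by (intro integrable_continuous_interval continuous_intros)
        have Dd: "D s = integral {0..1} (\<lambda>x. (d x)^2)" unfolding D_def d_def by simp
        have "integral {0..1} (\<lambda>x. 6 * s * (d x)^2 + 6 * s * (v 0 x)^2 + e + (d x)^2/e)
           = integral {0..1} (\<lambda>x. 6 * s * (d x)^2 + 6 * s * (v 0 x)^2 + e) + integral {0..1} (\<lambda>x. (d x)^2/e)"
          by (intro integral_add) (auto intro!: integrable_continuous_interval continuous_intros dc v0c simp: e[THEN less_imp_neq, symmetric])
        also have "integral {0..1} (\<lambda>x. 6 * s * (d x)^2 + 6 * s * (v 0 x)^2 + e) = integral {0..1} (\<lambda>x. 6 * s * (d x)^2 + 6 * s * (v 0 x)^2) + integral {0..1} (\<lambda>x::real. e)"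
          by (intro integral_add) (auto intro!: integrable_continuous_interval continuous_intros dc v0c simp: e[THEN less_imp_neq, symmetric])
        also have "integral {0..1} (\<lambda>x. 6 * s * (d x)^2 + 6 * s * (v 0 x)^2) = integral {0..1} (\<lambda>x. 6 * s * (d x)^2) + integral {0..1} (\<lambda>x. 6 * s * (v 0 x)^2)"
          by (intro integral_add) (auto intro!: integrable_continuous_interval continuous_intros dc v0c simp: e[THEN less_imp_neq, symmetric])
        finally show ?thesis unfolding Dd V_def integral_mult_right integral_divide by simp
      qed
      have "norm (integral {0..1} (\<lambda>x. cos (u0 x) * v 0 x - (sin (u s x) - sin (u0 x)) / s))
          \<le> integral {0..1} (\<lambda>x. 6 * s * (d x)^2 + 6 * s * (v 0 x)^2 + e + (d x)^2/e)"
      proof (rule integral_norm_bound_integral)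
        show "(\<lambda>x. cos (u0 x) * v 0 x - (sin (u s x) - sin (u0 x)) / s) integrable_on {0..1}"
          using uc[OF s] sp by (auto intro!: integrable_continuous_interval continuous_intros u0c v0c)
        show "(\<lambda>x. 6 * s * (d x)^2 + 6 * s * (v 0 x)^2 + e + (d x)^2/e) integrable_on {0..1}"
          by (auto intro!: integrable_continuous_interval continuous_intros dc v0c simp: e[THEN less_imp_neq, symmetric])
        fix x
        show "norm (cos (u0 x) * v 0 x - (sin (u s x) - sin (u0 x)) / s) \<le> 6 * s * (d x)^2 + 6 * s * (v 0 x)^2 + e + (d x)^2/e"
          using ptw[OF sp e, of "u0 x" "v 0 x" "u s x"] u00 unfolding d_def by simp
      qed
      then show ?case using int1 int2 by simp
    qed
  qed
  then have "I = 0"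
  proof -
    assume H: "\<And>e. e > 0 \<Longrightarrow> \<bar>I\<bar> \<le> e"
    show "I = 0"
    proof (rule ccontr)
      assume "I \<noteq> 0"
      then have "\<bar>I\<bar> > 0" by simp
      then have "\<bar>I\<bar> \<le> \<bar>I\<bar>/2" using H[of "\<bar>I\<bar>/2"] by simp
      then show False using \<open>\<bar>I\<bar> > 0\<close> by simp
    qed
  qed
  then show ?thesis using goal_eq by simp
qed

end
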